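(* Let $m\ge 1$ and $d_k\ge 1$ be integers, let $u\in\mathbb{R}^m$ with $\|u\|=1$, and let $g_1,\ldots,g_{d_k}\in\mathbb{R}^m$ be vectors such that no $g_i$ is colinear with $u$. Consider the optimization problem $$\min_{V_1,\ldots,V_{d_k}\in\mathbb{R}^m}\ \sum_{i=1}^{d_k} V_i^T g_i \quad\text{subject to}\quad u^T\Big(\sum_{j=1}^{d_k} V_j\Big)=2-d_k,\qquad \|V_i\|=1\ \ (i=1,\ldots,d_k).$$ Then at an optimum $(V_1^*,\ldots,V_{d_k}^* )$ of this problem, every vector $V_i^*$ lies in the (two-dimensional) linear subspace of $\mathbb{R}^m$ spanned by $g_i$ and $u$.
   Context: This problem is the block subproblem arising in a low-rank (Burer–Monteiro) SDP relaxation of a pairwise discrete graphical model: the $V_i$ are the rows of the low-rank factor associated with the $d_k$ values of a discrete variable $x_k$, $u$ is the fixed last row $V_{d+1}$ of the factor, and the $g_i$ are fixed vectors determined by the other rows. $\|\cdot\|$ is the Euclidean norm. *)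

theory Defs
  imports "HOL-Analysis.Analysis"
begin

definition block_feasible :: "'a::euclidean_space \<Rightarrow> nat \<Rightarrow> (nat \<Rightarrow> 'a) \<Rightarrow> bool" where
  "block_feasible u d V \<longleftrightarrow>
     u \<bullet> (\<Sum>j\<in>{1..d}. V j) = 2 - real d \<and> (\<forall>i\<in>{1..d}. norm (V i) = 1)"

definition block_objective :: "nat \<Rightarrow> (nat \<Rightarrow> 'a::euclidean_space) \<Rightarrow> (nat \<Rightarrow> 'a) \<Rightarrow> real" where
  "block_objective d g V = (\<Sum>i\<in>{1..d}. V i \<bullet> g i)"

end

theory Submission
  imports Defs
begin

lemma key:
  fixes u g v :: "'a::euclidean_space"
  assumes nu: "norm u = 1" and ng: "\<not> (\<exists>c::real. g = c *\<^sub>R u)" and nv: "norm v = 1"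
    and opt: "\<And>x. norm x = 1 \<Longrightarrow> u \<bullet> x = u \<bullet> v \<Longrightarrow> v \<bullet> g \<le> x \<bullet> g"
  shows "v \<in> span {g, u}"
proof -
  define c where "c = u \<bullet> v"
  define w where "w = v - c *\<^sub>R u"
  define h where "h = g - (g \<bullet> u) *\<^sub>R u"
  have uu: "u \<bullet> u = 1" using nu by (metis norm_eq_1)
  have wu: "w \<bullet> u = 0" unfolding w_def c_def using uu by (simp add: inner_diff_right inner_commute)
  have hu: "h \<bullet> u = 0" unfolding h_def using uu by (simp add: inner_diff_left)
  have h0: "h \<noteq> 0" using ng unfolding h_def by (metis eq_iff_diff_eq_0)
  have nh: "norm h > 0" using h0 by simp
  define x where "x = c *\<^sub>R u - (norm w / norm h) *\<^sub>R h"
  have vv: "v \<bullet> v = 1" using nv by (metis norm_eq_1)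
  have vdec: "v = c *\<^sub>R u + w" unfolding w_def by simp
  have "v \<bullet> v = c * c + w \<bullet> w" unfolding vdec using uu wu
    by (simp add: inner_add_left inner_add_right inner_commute)
  hence ww: "w \<bullet> w = 1 - c*c" using vv by simp
  have hh: "h \<bullet> h = norm h * norm h" by (simp add: dot_square_norm power2_eq_square)
  have "x \<bullet> x = c*c + (norm w / norm h)^2 * (h \<bullet> h)" unfolding x_def using uu hu
    by (simp add: inner_diff_left inner_diff_right inner_commute power2_eq_square)
  also have "\<dots> = c*c + norm w ^2" using hh nh by (simp add: power2_eq_square field_simps)
  also have "\<dots> = 1" using ww by (simp add: dot_square_norm[symmetric])
  finally have "norm x = 1" by (metis norm_eq_1)
  moreover have "u \<bullet> x = u \<bullet> v" unfolding x_def c_def using uu hu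
    by (simp add: inner_diff_right inner_commute)
  ultimately have le: "v \<bullet> g \<le> x \<bullet> g" by (rule opt)
  have gdec: "g = h + (g \<bullet> u) *\<^sub>R u" unfolding h_def by simp
  have vg: "v \<bullet> g = c * (g \<bullet> u) + w \<bullet> h"
    unfolding vdec using uu wu hu
    by (subst (1 2) gdec) (simp add: inner_add_left inner_add_right inner_commute)
  have xg: "x \<bullet> g = c * (g \<bullet> u) - norm w * norm h"
  proof -
    have "x \<bullet> g = x \<bullet> h + (g \<bullet> u) * (x \<bullet> u)" by (subst gdec) (simp add: inner_add_right)
    also have "x \<bullet> h = - (norm w / norm h) * (h \<bullet> h)" unfolding x_def using hu
      using inner_commute[of h u] by (simp add: inner_diff_left)
    also have "\<dots> = - norm w * norm h" using hh nh by (simp add: field_simps)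
    also have "x \<bullet> u = c" unfolding x_def using uu hu by (simp add: inner_diff_left)
    finally show ?thesis by simp
  qed
  have "(-w) \<bullet> h \<ge> norm (-w) * norm h" using le vg xg by simp
  hence "(-w) \<bullet> h = norm (-w) * norm h" using norm_cauchy_schwarz[of "-w" h] by linarith
  hence e: "norm (-w) *\<^sub>R h = norm h *\<^sub>R (-w)" using norm_cauchy_schwarz_eq by blast
  have "w = (- inverse (norm h)) *\<^sub>R (norm h *\<^sub>R (-w))" using nh by simp
  also have "\<dots> = (- inverse (norm h)) *\<^sub>R (norm w *\<^sub>R h)" using e by simp
  finally have weq: "w = (- (inverse (norm h) * norm w)) *\<^sub>R h" by simp
  have "h \<in> span {g, u}" unfolding h_def
    by (intro span_diff span_mul span_base) auto
  hence "w \<in> span {g, u}" by (subst weq) (rule span_mul)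
  moreover have "c *\<^sub>R u \<in> span {g, u}" by (intro span_mul span_base) auto
  ultimately show ?thesis unfolding vdec by (rule span_add[rotated])
qed

theorem theorem2:
  fixes u :: "'a::euclidean_space" and g V :: "nat \<Rightarrow> 'a" and d :: nat
  assumes "d \<ge> 1"
    and "norm u = 1"
    and "\<forall>i\<in>{1..d}. \<not> (\<exists>c::real. g i = c *\<^sub>R u)"
    and "block_feasible u d V"
    and "\<forall>W. block_feasible u d W \<longrightarrow> block_objective d g V \<le> block_objective d g W"
  shows "\<forall>i\<in>{1..d}. V i \<in> span {g i, u}"
proof
  fix i assume i: "i \<in> {1..d}"
  show "V i \<in> span {g i, u}"
  proof (rule key)
    show "norm u = 1" by fact
    show "\<not> (\<exists>c::real. g i = c *\<^sub>R u)" using assms(3) i by blast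
    show "norm (V i) = 1" using assms(4) i unfolding block_feasible_def by blast
    fix x assume nx: "norm x = 1" and ux: "u \<bullet> x = u \<bullet> V i"
    define W where "W = V(i := x)"
    have fin: "finite {1..d}" by simp
    have rest: "(\<Sum>j\<in>{1..d}-{i}. W j) = (\<Sum>j\<in>{1..d}-{i}. V j)"
      by (rule sum.cong) (auto simp: W_def)
    have rest2: "(\<Sum>j\<in>{1..d}-{i}. W j \<bullet> g j) = (\<Sum>j\<in>{1..d}-{i}. V j \<bullet> g j)"
      by (rule sum.cong) (auto simp: W_def)
    have sW: "(\<Sum>j\<in>{1..d}. W j) = x + (\<Sum>j\<in>{1..d}-{i}. V j)"
      using sum.remove[OF fin i, of W] rest by (simp add: W_def)
    have sV: "(\<Sum>j\<in>{1..d}. V j) = V i + (\<Sum>j\<in>{1..d}-{i}. V j)"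
      using sum.remove[OF fin i, of V] by simp
    have "block_feasible u d W"
    proof -
      have a: "u \<bullet> (\<Sum>j\<in>{1..d}. V j) = 2 - real d" using assms(4) unfolding block_feasible_def by blast
      have "u \<bullet> (\<Sum>j\<in>{1..d}. W j) = u \<bullet> (\<Sum>j\<in>{1..d}. V j)"
        unfolding sW sV inner_add_right ux ..
      moreover have "\<forall>j\<in>{1..d}. norm (W j) = 1" using assms(4) nx unfolding block_feasible_def W_def by auto
      ultimately show ?thesis using a unfolding block_feasible_def by simp
    qed
    hence "block_objective d g V \<le> block_objective d g W" using assms(5) by blast
    moreover have "block_objective d g W = x \<bullet> g i + (\<Sum>j\<in>{1..d}-{i}. V j \<bullet> g j)"
      using sum.remove[OF fin i, of "\<lambda>j. W j \<bullet> g j"] rest2 unfolding block_objective_def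
      by (simp add: W_def)
    moreover have "block_objective d g V = V i \<bullet> g i + (\<Sum>j\<in>{1..d}-{i}. V j \<bullet> g j)"
      using sum.remove[OF fin i, of "\<lambda>j. V j \<bullet> g j"] unfolding block_objective_def by simp
    ultimately show "V i \<bullet> g i \<le> x \<bullet> g i" by simp
  qed
qed

end
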